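(* There is an isomorphism of abelian groups \[ C_2^{\rm SLB}(X)\cong\bigoplus_{\substack{a,b,c\in\mathbb Z_p,\ a\ne b,\ b\ne c,\\ (a,b,c,[a,b,c])=\min Q(a,b,c)}}\mathbb Z\big\langle((a,b),(a,c))\big\rangle\ \oplus\bigoplus_{\substack{a,b\in\mathbb Z_p,\ a<b}}\mathbb Z_2\big\langle((a,a),(a,b))\big\rangle, \] and \[ C_1^{\rm SLB}(X)\cong\bigoplus_{\substack{a,b\in\mathbb Z_p,\ a<b}}\mathbb Z\langle(a,b)\rangle\ \oplus\ \bigoplus_{a\in\mathbb Z_p}\mathbb Z_2\langle(a,a)\rangle, \] where $Q(a,b,c)=\{(a,b,c,[a,b,c]),\ (b,a,[a,b,c],c),\ (c,[a,b,c],a,b),\ ([a,b,c],c,b,a)\}\subset\mathbb Z_p^4$, $\mathbb Z\langle x\rangle$ denotes an infinite cyclic group generated by (the class of) $x$ and $\mathbb Z_2\langle x\rangle$ a cyclic group of order $2$ generated by (the class of) $x$.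
   Context: Let $p$ be an odd prime, $X=\mathbb Z_p$, and $[a,b,c]=a-b+c$. Let $\rho((a,b))=(b,a)$, $(a,b)\,\underline{\star}\,(a,c)=(c,[a,b,c])$, $(a,b)\,\overline{\star}\,(a,c)=(c,[a,c,b])$. For $n\ge1$ let $C_n^{\rm lb}(X)$ be the free abelian group on tuples $((a,b_1),\dots,(a,b_n))$, $a,b_i\in X$. Let $D_n^{\rm lb}(X)$ be the subgroup generated by tuples with $b_i=b_{i+1}$ for some $i\in\{1,\dots,n-1\}$, and $D_n^{\rm lb}(X,\rho)$ the subgroup generated by all elements $((a,b_1),\dots,(a,b_n))+((a,b_1)\underline\star(a,b_i),\dots,(a,b_{i-1})\underline\star(a,b_i),\rho((a,b_i)),(a,b_{i+1})\overline\star(a,b_i),\dots,(a,b_n)\overline\star(a,b_i))$, $i\in\{1,\dots,n\}$. Define $C_n^{\rm SLB}(X)=C_n^{\rm lb}(X)/(D_n^{\rm lb}(X)+D_n^{\rm lb}(X,\rho))$. Elements of $\mathbb Z_p$ are represented by the integers $0,1,\dots,p-1$, and $<$ on $\mathbb Z_p$ is the usual order of these representatives; $\mathbb Z_p^4$ is ordered lexicographically: $(a_1,\dots,a_4)<(b_1,\dots,b_4)$ iff $a_j<b_j$ for the least $j$ with $a_j\ne b_j$. $\min Q$ refers to this order. *)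

theory Defs
  imports "HOL-Algebra.Free_Abelian_Groups" "HOL-Computational_Algebra.Primes"
begin

text \<open>X = Z_p, with elements represented by the integers 0,...,p-1.\<close>

definition Zp :: "int \<Rightarrow> int set" where
  "Zp p = {0..<p}"

text \<open>The heap operation [a,b,c] = a - b + c in Z_p.\<close>
definition br :: "int \<Rightarrow> int \<Rightarrow> int \<Rightarrow> int \<Rightarrow> int" where
  "br p a b c = (a - b + c) mod p"

definition rho :: "int \<times> int \<Rightarrow> int \<times> int" where
  "rho x = (snd x, fst x)"

text \<open>(a,b) under-star (a,c) = (c,[a,b,c]);  (a,b) over-star (a,c) = (c,[a,c,b]).\<close>
definition ustar :: "int \<Rightarrow> int \<times> int \<Rightarrow> int \<times> int \<Rightarrow> int \<times> int" where
  "ustar p x y = (snd y, br p (fst x) (snd x) (snd y))"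

definition ostar :: "int \<Rightarrow> int \<times> int \<Rightarrow> int \<times> int \<Rightarrow> int \<times> int" where
  "ostar p x y = (snd y, br p (fst x) (snd y) (snd x))"

text \<open>Generators of C_n^lb(X): tuples ((a,b_1),...,(a,b_n)), as lists of length n.\<close>
definition LB :: "int \<Rightarrow> nat \<Rightarrow> (int \<times> int) list set" where
  "LB p n = {xs. length xs = n \<and> (\<exists>a \<in> Zp p. \<forall>x \<in> set xs. fst x = a \<and> snd x \<in> Zp p)}"

definition C_lb :: "int \<Rightarrow> nat \<Rightarrow> ((int \<times> int) list \<Rightarrow>\<^sub>0 int) monoid" where
  "C_lb p n = free_Abelian_group (LB p n)"

text \<open>Generators of D_n^lb(X): tuples with b_i = b_(i+1) for some i (0-indexed here).\<close>
definition D_lb_gens :: "int \<Rightarrow> nat \<Rightarrow> ((int \<times> int) list \<Rightarrow>\<^sub>0 int) set" where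
  "D_lb_gens p n = {frag_of xs | xs. xs \<in> LB p n \<and>
      (\<exists>i. i + 1 < n \<and> snd (xs ! i) = snd (xs ! (i + 1)))}"

text \<open>The tuple ((a,b_1) under-star (a,b_i), ..., rho(a,b_i), ..., (a,b_n) over-star (a,b_i)),
  with position i given 0-indexed.\<close>
definition act :: "int \<Rightarrow> nat \<Rightarrow> (int \<times> int) list \<Rightarrow> (int \<times> int) list" where
  "act p i xs = map (\<lambda>x. ustar p x (xs ! i)) (take i xs) @ [rho (xs ! i)]
                 @ map (\<lambda>x. ostar p x (xs ! i)) (drop (Suc i) xs)"

definition D_rho_gens :: "int \<Rightarrow> nat \<Rightarrow> ((int \<times> int) list \<Rightarrow>\<^sub>0 int) set" where
  "D_rho_gens p n = {frag_of xs + frag_of (act p i xs) | xs i. xs \<in> LB p n \<and> i < n}"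

text \<open>D_n^lb(X) + D_n^lb(X,rho), the subgroup generated by both generating sets.\<close>
definition D_SLB :: "int \<Rightarrow> nat \<Rightarrow> ((int \<times> int) list \<Rightarrow>\<^sub>0 int) set" where
  "D_SLB p n = generate (C_lb p n) (D_lb_gens p n \<union> D_rho_gens p n)"

definition C_SLB :: "int \<Rightarrow> nat \<Rightarrow> ((int \<times> int) list \<Rightarrow>\<^sub>0 int) set monoid" where
  "C_SLB p n = C_lb p n Mod D_SLB p n"

definition cls :: "int \<Rightarrow> nat \<Rightarrow> (int \<times> int) list \<Rightarrow> ((int \<times> int) list \<Rightarrow>\<^sub>0 int) set" where
  "cls p n xs = D_SLB p n #>\<^bsub>C_lb p n\<^esub> frag_of xs"

definition lex4_less :: "int \<times> int \<times> int \<times> int \<Rightarrow> int \<times> int \<times> int \<times> int \<Rightarrow> bool" where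
  "lex4_less x y = (case x of (a1,a2,a3,a4) \<Rightarrow> case y of (b1,b2,b3,b4) \<Rightarrow>
      a1 < b1 \<or> (a1 = b1 \<and> (a2 < b2 \<or> (a2 = b2 \<and> (a3 < b3 \<or> (a3 = b3 \<and> a4 < b4))))))"

definition lex4_le :: "int \<times> int \<times> int \<times> int \<Rightarrow> int \<times> int \<times> int \<times> int \<Rightarrow> bool" where
  "lex4_le x y = (x = y \<or> lex4_less x y)"

definition is_lexmin :: "int \<times> int \<times> int \<times> int \<Rightarrow> (int \<times> int \<times> int \<times> int) set \<Rightarrow> bool" where
  "is_lexmin x Q = (x \<in> Q \<and> (\<forall>y \<in> Q. lex4_le x y))"

definition Qset :: "int \<Rightarrow> int \<Rightarrow> int \<Rightarrow> int \<Rightarrow> (int \<times> int \<times> int \<times> int) set" where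
  "Qset p a b c = (let d = br p a b c in
     {(a, b, c, d), (b, a, d, c), (c, d, a, b), (d, c, b, a)})"

text \<open>G is isomorphic to (direct sum over Zs of Z) + (direct sum over Ts of Z_2), via an
  isomorphism sending the standard generator of the summand indexed by x to g x.\<close>
definition unit_vec :: "'x set \<Rightarrow> 'x \<Rightarrow> 'x \<Rightarrow> int" where
  "unit_vec I k = (\<lambda>i\<in>I. if i = k then 1 else 0)"

definition Z_Z2_sum :: "'x set \<Rightarrow> 'x set \<Rightarrow> ('x + 'x \<Rightarrow> int) monoid" where
  "Z_Z2_sum Zs Ts = sum_group (Inl ` Zs \<union> Inr ` Ts)
      (\<lambda>k. case k of Inl _ \<Rightarrow> integer_group | Inr _ \<Rightarrow> integer_mod_group 2)"

definition cyclic_decomp :: "('g, 'm) monoid_scheme \<Rightarrow> ('x \<Rightarrow> 'g) \<Rightarrow> 'x set \<Rightarrow> 'x set \<Rightarrow> bool" where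
  "cyclic_decomp G g Zs Ts \<longleftrightarrow>
     (\<exists>\<phi>. \<phi> \<in> iso (Z_Z2_sum Zs Ts) G
        \<and> (\<forall>x \<in> Zs. \<phi> (unit_vec (Inl ` Zs \<union> Inr ` Ts) (Inl x)) = g x)
        \<and> (\<forall>x \<in> Ts. \<phi> (unit_vec (Inl ` Zs \<union> Inr ` Ts) (Inr x)) = g x))"

end

theory Submission
  imports Defs "HOL-Library.Product_Lexorder"
begin


definition cf :: "'a set \<Rightarrow> ('a \<Rightarrow> 'a) \<Rightarrow> ('a \<Rightarrow> int) \<Rightarrow> ('a \<Rightarrow>\<^sub>0 int) \<Rightarrow> 'a \<Rightarrow> int" where
  "cf S rep e f z = (\<Sum>x\<in>{x\<in>S. rep x = z}. e x * Poly_Mapping.lookup f x)"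

definition hmap :: "'a set \<Rightarrow> ('a \<Rightarrow> 'a) \<Rightarrow> ('a \<Rightarrow> int) \<Rightarrow> 'a set \<Rightarrow> 'a set \<Rightarrow> ('a \<Rightarrow>\<^sub>0 int) \<Rightarrow> ('a + 'a \<Rightarrow> int)" where
  "hmap S rep e Zs Ts f = (\<lambda>k\<in>Inl ` Zs \<union> Inr ` Ts. case k of Inl z \<Rightarrow> cf S rep e f z | Inr z \<Rightarrow> cf S rep e f z mod 2)"

lemma cf_add: "finite S \<Longrightarrow> cf S rep e (f + g) z = cf S rep e f z + cf S rep e g z"
  by (simp add: cf_def lookup_add sum.distrib ring_distribs)

lemma cf_frag: "finite S \<Longrightarrow> y \<in> S \<Longrightarrow> cf S rep e (frag_of y) z = (if rep y = z then e y else 0)"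
  unfolding cf_def by (simp add: if_distrib[of "\<lambda>t. e _ * t"] sum.delta cong: if_cong)

lemma group_Z_Z2: "group (Z_Z2_sum Zs Ts)"
  unfolding Z_Z2_sum_def by (rule sum_group) (auto split: sum.splits)

lemma carrier_Z_Z2:
  assumes "finite Zs" "finite Ts"
  shows "carrier (Z_Z2_sum Zs Ts) = (\<Pi>\<^sub>E k\<in>Inl ` Zs \<union> Inr ` Ts. case k of Inl _ \<Rightarrow> UNIV | Inr _ \<Rightarrow> {0..<2})"
proof -
  have fin: "finite (Inl ` Zs \<union> Inr ` Ts)" using assms by auto
  have c: "\<And>i. carrier (case i of Inl x \<Rightarrow> integer_group | Inr x \<Rightarrow> integer_mod_group 2) = (case i of Inl _ \<Rightarrow> (UNIV::int set) | Inr _ \<Rightarrow> {0..<2})"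
    by (case_tac i) (auto simp: carrier_integer_mod_group)
  show ?thesis
    unfolding Z_Z2_sum_def
    apply (subst carrier_sum_group)
     apply (auto split: sum.splits)[1]
    apply (simp only: c)
    using fin by (simp add: rev_finite_subset[OF fin])
qed

lemma subgroup_sum_closed:
  assumes "subgroup D (free_Abelian_group S)" "finite A" "\<And>i. i \<in> A \<Longrightarrow> u i \<in> D"
  shows "sum u A \<in> D"
  using assms(2,3)
proof (induction A rule: finite_induct)
  case empty
  then show ?case using subgroup.one_closed[OF assms(1)] by simp
next
  case (insert x F)
  then show ?case using subgroup.m_closed[OF assms(1), of "u x" "sum u F"] by simp
qed

lemma subgroup_cmul_closed:
  assumes "subgroup D (free_Abelian_group S)" "x \<in> D"
  shows "frag_cmul k x \<in> D"
proof -
  have "x \<in> carrier (free_Abelian_group S)" using assms subgroup.subset by blast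
  then have k: "Poly_Mapping.keys x \<subseteq> S" by simp
  have "Group.pow (free_Abelian_group S) x k \<in> D"
    using group.subgroup_int_pow_closed[OF group_free_Abelian_group assms] .
  then show ?thesis using int_pow_free_Abelian_group[OF k] by simp
qed

lemma subgroup_add_closed:
  assumes "subgroup D (free_Abelian_group S)" "x \<in> D" "y \<in> D"
  shows "x + y \<in> D"
  using subgroup.m_closed[OF assms(1) assms(2,3)] by simp

lemma subgroup_diff_closed:
  assumes "subgroup D (free_Abelian_group S)" "x \<in> D" "y \<in> D"
  shows "x - y \<in> D"
proof -
  have "frag_cmul (-1) y \<in> D" using subgroup_cmul_closed[OF assms(1,3)] .
  then have "- y \<in> D" by simp
  from subgroup_add_closed[OF assms(1,2) this] show ?thesis by simp
qed



lemma hmap_hom: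
  assumes finS: "finite S" and ZS: "Zs \<subseteq> S" and TS: "Ts \<subseteq> S"
  shows "hmap S rep e Zs Ts \<in> hom (free_Abelian_group S) (Z_Z2_sum Zs Ts)"
proof (rule homI)
  have fZ: "finite Zs" "finite Ts" using finS ZS TS finite_subset by auto
  fix x assume "x \<in> carrier (free_Abelian_group S)"
  show "hmap S rep e Zs Ts x \<in> carrier (Z_Z2_sum Zs Ts)"
    unfolding carrier_Z_Z2[OF fZ] hmap_def by (auto simp: PiE_iff split: sum.splits)
next
  fix x y assume "x \<in> carrier (free_Abelian_group S)" "y \<in> carrier (free_Abelian_group S)"
  show "hmap S rep e Zs Ts (x \<otimes>\<^bsub>free_Abelian_group S\<^esub> y) =
        hmap S rep e Zs Ts x \<otimes>\<^bsub>Z_Z2_sum Zs Ts\<^esub> hmap S rep e Zs Ts y"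
    unfolding Z_Z2_sum_def mult_sum_group mult_free_Abelian_group hmap_def
    by (rule ext) (auto simp: cf_add[OF finS] mod_add_eq split: sum.splits)
qed

lemma cf_single:
  assumes "finite S" "z \<in> S" "rep z = z"
    "\<And>x. x \<in> S \<Longrightarrow> rep x = z \<Longrightarrow> x \<noteq> z \<Longrightarrow> Poly_Mapping.lookup f x = 0"
  shows "cf S rep e f z = e z * Poly_Mapping.lookup f z"
proof -
  have "cf S rep e f z = e z * Poly_Mapping.lookup f z + (\<Sum>x\<in>{x\<in>S. rep x = z} - {z}. e x * Poly_Mapping.lookup f x)"
    unfolding cf_def using assms by (subst sum.remove[of _ z]) auto
  also have "(\<Sum>x\<in>{x\<in>S. rep x = z} - {z}. e x * Poly_Mapping.lookup f x) = 0"
    using assms by (intro sum.neutral) auto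
  finally show ?thesis by simp
qed

lemma frag_expand:
  assumes "finite S" "Poly_Mapping.keys f \<subseteq> S"
  shows "f = (\<Sum>x\<in>S. frag_cmul (Poly_Mapping.lookup f x) (frag_of x))"
proof (rule poly_mapping_eqI)
  fix k
  have "(\<Sum>x\<in>S. Poly_Mapping.lookup f x * (if k = x then 1 else 0)) = (if k \<in> S then Poly_Mapping.lookup f k else 0)"
    using assms(1) by (simp add: if_distrib[of "\<lambda>t. _ * t"] cong: if_cong)
  moreover have "k \<notin> S \<Longrightarrow> Poly_Mapping.lookup f k = 0" using assms(2) by (auto simp: in_keys_iff)
  ultimately show "Poly_Mapping.lookup f k = Poly_Mapping.lookup (\<Sum>x\<in>S. frag_cmul (Poly_Mapping.lookup f x) (frag_of x)) k"
    by (auto simp: lookup_sum)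
qed

lemma abstract_decomp:
  fixes S :: "'a set" and R :: "('a \<Rightarrow>\<^sub>0 int) set"
  assumes finS: "finite S" and ZS: "Zs \<subseteq> S" and TS: "Ts \<subseteq> S" and disj: "Zs \<inter> Ts = {}"
    and Rc: "R \<subseteq> carrier (free_Abelian_group S)"
    and Rz: "\<And>r z. r \<in> R \<Longrightarrow> z \<in> Zs \<Longrightarrow> cf S rep e r z = 0"
    and Rt: "\<And>r z. r \<in> R \<Longrightarrow> z \<in> Ts \<Longrightarrow> even (cf S rep e r z)"
    and repin: "\<And>x. x \<in> S \<Longrightarrow> e x \<noteq> 0 \<Longrightarrow> rep x \<in> Zs \<union> Ts"
    and red: "\<And>x. x \<in> S \<Longrightarrow> frag_of x - frag_cmul (e x) (frag_of (rep x)) \<in> generate (free_Abelian_group S) R"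
    and fixz: "\<And>z. z \<in> Zs \<union> Ts \<Longrightarrow> rep z = z \<and> e z = 1"
    and two: "\<And>t. t \<in> Ts \<Longrightarrow> frag_cmul 2 (frag_of t) \<in> generate (free_Abelian_group S) R"
  shows "cyclic_decomp (free_Abelian_group S Mod generate (free_Abelian_group S) R)
           (\<lambda>x. generate (free_Abelian_group S) R #>\<^bsub>free_Abelian_group S\<^esub> frag_of x) Zs Ts"
proof -
  define G where "G = free_Abelian_group S"
  define D where "D = generate G R"
  define H where "H = Z_Z2_sum Zs Ts"
  define I where "I = Inl ` Zs \<union> Inr ` Ts"
  define h where "h = hmap S rep e Zs Ts"
  have fZ: "finite Zs" "finite Ts" using finS ZS TS finite_subset by auto
  have grpG: "group G" unfolding G_def by simp
  have cgG: "comm_group G" unfolding G_def by (rule abelian_free_Abelian_group)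
  have subD: "subgroup D G" unfolding D_def using group.generate_is_subgroup[OF grpG] Rc G_def by blast
  have subD': "subgroup D (free_Abelian_group S)" using subD G_def by simp
  have hom: "h \<in> hom G H" unfolding h_def G_def H_def by (rule hmap_hom[OF finS ZS TS])
  have gh: "group_hom G H h" using hom grpG group_Z_Z2 unfolding H_def
    by (simp add: group_hom_def group_hom_axioms_def)
  have oneH: "\<one>\<^bsub>H\<^esub> = (\<lambda>k\<in>I. 0)"
    unfolding H_def Z_Z2_sum_def I_def one_sum_group
    by (rule ext) (auto split: sum.splits)
  have hfrag: "h (frag_of x) = unit_vec I (Inl x)" if "x \<in> Zs" for x
  proof -
    have xS: "x \<in> S" using that ZS by auto
    show ?thesis
      unfolding h_def hmap_def unit_vec_def I_def
      using fixz[of x] that disj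
      apply (intro ext)
      apply (auto simp: cf_frag[OF finS xS] split: sum.splits)
      done
  qed
  have hfrag2: "h (frag_of x) = unit_vec I (Inr x)" if "x \<in> Ts" for x
  proof -
    have xS: "x \<in> S" using that TS by auto
    show ?thesis
      unfolding h_def hmap_def unit_vec_def I_def
      using fixz[of x] that disj
      apply (intro ext)
      apply (auto simp: cf_frag[OF finS xS] split: sum.splits)
      done
  qed
  have surj: "h ` carrier G = carrier H"
  proof
    show "h ` carrier G \<subseteq> carrier H" using hom by (auto simp: hom_def)
  next
    show "carrier H \<subseteq> h ` carrier G"
    proof
      fix v assume v: "v \<in> carrier H"
      define fv where "fv = (\<lambda>x. if x \<in> Zs then v (Inl x) else if x \<in> Ts then v (Inr x) else 0)"
      have finfv: "finite {x. fv x \<noteq> 0}"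
        by (rule finite_subset[of _ "Zs \<union> Ts"]) (use fZ in \<open>auto simp: fv_def split: if_splits\<close>)
      define f where "f = Abs_poly_mapping fv"
      have lf: "Poly_Mapping.lookup f = fv" unfolding f_def using finfv by simp
      have fG: "f \<in> carrier G" unfolding G_def using ZS TS
        by (auto simp: in_keys_iff lf fv_def split: if_splits)
      have vI: "v \<in> (\<Pi>\<^sub>E k\<in>I. case k of Inl _ \<Rightarrow> UNIV | Inr _ \<Rightarrow> {0..<2})"
        using v unfolding H_def I_def carrier_Z_Z2[OF fZ] .
      have cfz: "cf S rep e f z = fv z" if "z \<in> Zs \<union> Ts" for z
      proof -
        have "cf S rep e f z = e z * Poly_Mapping.lookup f z"
          apply (rule cf_single[OF finS])
          using that ZS TS fixz apply auto[2]
          using fixz unfolding lf fv_def by (auto split: if_splits)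
        then show ?thesis using fixz[OF that] lf by simp
      qed
      have "h f = v"
      proof (rule ext)
        fix k
        show "h f k = v k"
        proof (cases "k \<in> I")
          case False
          then show ?thesis using vI unfolding h_def hmap_def I_def by (auto simp: PiE_def extensional_def)
        next
          case True
          then obtain z where "k = Inl z \<and> z \<in> Zs \<or> k = Inr z \<and> z \<in> Ts" unfolding I_def by auto
          then show ?thesis
          proof
            assume a: "k = Inl z \<and> z \<in> Zs"
            then show ?thesis unfolding h_def hmap_def using cfz[of z] by (auto simp: fv_def)
          next
            assume a: "k = Inr z \<and> z \<in> Ts"
            then have "v k \<in> {0..<2}" using PiE_mem[OF vI, of "Inr z"] unfolding I_def by auto
            then show ?thesis unfolding h_def hmap_def using cfz[of z] a disj by (auto simp: fv_def)
          qed
        qed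
      qed
      then show "v \<in> h ` carrier G" using fG by blast
    qed
  qed
  have ker: "kernel G H h = D"
  proof
    have "R \<subseteq> kernel G H h"
    proof
      fix r assume r: "r \<in> R"
      have "h r = \<one>\<^bsub>H\<^esub>"
        unfolding oneH h_def hmap_def I_def
        using Rz[OF r] Rt[OF r] by (intro ext) (auto split: sum.splits)
      moreover have "r \<in> carrier G" using r Rc G_def by blast
      ultimately show "r \<in> kernel G H h" unfolding kernel_def by blast
    qed
    then show "D \<subseteq> kernel G H h"
      unfolding D_def by (rule group.generate_subgroup_incl[OF grpG _ group_hom.subgroup_kernel[OF gh]])
  next
    show "kernel G H h \<subseteq> D"
    proof
      fix f assume "f \<in> kernel G H h"
      then have fG: "f \<in> carrier G" and hf: "h f = \<one>\<^bsub>H\<^esub>" unfolding kernel_def by auto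
      have keys: "Poly_Mapping.keys f \<subseteq> S" using fG G_def by simp
      have cz: "cf S rep e f z = 0" if "z \<in> Zs" for z
        using fun_cong[OF hf, of "Inl z"] that unfolding oneH h_def hmap_def I_def by auto
      have ct: "cf S rep e f z mod 2 = 0" if "z \<in> Ts" for z
        using fun_cong[OF hf, of "Inr z"] that unfolding oneH h_def hmap_def I_def by auto
      define lf where "lf = Poly_Mapping.lookup f"
      define g where "g = (\<Sum>x\<in>S. frag_cmul (lf x * e x) (frag_of (rep x)))"
      have fexp: "f = (\<Sum>x\<in>S. frag_cmul (lf x) (frag_of x))"
        unfolding lf_def by (rule frag_expand[OF finS keys])
      have fg: "f - g = (\<Sum>x\<in>S. frag_cmul (lf x) (frag_of x - frag_cmul (e x) (frag_of (rep x))))"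
      proof -
        have "(\<Sum>x\<in>S. frag_cmul (lf x) (frag_of x - frag_cmul (e x) (frag_of (rep x))))
            = (\<Sum>x\<in>S. frag_cmul (lf x) (frag_of x) - frag_cmul (lf x * e x) (frag_of (rep x)))"
          by (rule sum.cong) (auto intro!: poly_mapping_eqI simp: lookup_minus lookup_add algebra_simps)
        then show ?thesis using fexp g_def by (simp add: sum_subtractf)
      qed
      have red': "frag_of x - frag_cmul (e x) (frag_of (rep x)) \<in> D" if "x \<in> S" for x
        using red[OF that] unfolding D_def G_def .
      have d1: "f - g \<in> D"
        unfolding fg by (intro subgroup_sum_closed[OF subD' finS] subgroup_cmul_closed[OF subD'] red')
      have lg: "Poly_Mapping.lookup g k = cf S rep e f k" for k
      proof -
        have "cf S rep e f k = (\<Sum>x\<in>S. if rep x = k then e x * lf x else 0)"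
          unfolding cf_def lf_def using finS by (simp add: sum.inter_filter)
        then show ?thesis unfolding g_def by (auto simp: lookup_sum intro!: sum.cong)
      qed
      define g2 where "g2 = (\<Sum>t\<in>Ts. frag_cmul (cf S rep e f t) (frag_of t))"
      have lg2: "Poly_Mapping.lookup g2 k = (if k \<in> Ts then cf S rep e f k else 0)" for k
        unfolding g2_def using fZ by (simp add: lookup_sum if_distrib[of "\<lambda>t. _ * t"] cong: if_cong)
      have "g = g2"
      proof (rule poly_mapping_eqI)
        fix k
        show "Poly_Mapping.lookup g k = Poly_Mapping.lookup g2 k"
        proof (cases "k \<in> Ts")
          case True then show ?thesis using lg lg2 by simp
        next
          case False
          have "cf S rep e f k = 0"
          proof (cases "k \<in> Zs")
            case True then show ?thesis using cz by simp
          next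
            case False2: False
            show ?thesis unfolding cf_def
              using repin False False2 by (intro sum.neutral) force
          qed
          then show ?thesis using lg lg2 False by simp
        qed
      qed
      have d2: "g \<in> D"
        unfolding \<open>g = g2\<close> g2_def
      proof (intro subgroup_sum_closed[OF subD' fZ(2)])
        fix t assume t: "t \<in> Ts"
        obtain q where q: "cf S rep e f t = 2 * q" using ct[OF t] by (metis mod_0_imp_dvd dvd_def)
        have "frag_cmul q (frag_cmul 2 (frag_of t)) \<in> D"
          using subgroup_cmul_closed[OF subD'] two[OF t] unfolding D_def G_def by blast
        then show "frag_cmul (cf S rep e f t) (frag_of t) \<in> D" using q by (simp add: mult.commute)
      qed
      have "f = (f - g) + g" by simp
      then show "f \<in> D" using subgroup_add_closed[OF subD' d1 d2] by simp
    qed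
  qed
  have grpQ: "group (G Mod D)"
    using normal.factorgroup_is_group[OF comm_group.subgroup_imp_normal[OF cgG subD]] .
  have iso1: "(\<lambda>X. the_elem (h`X)) \<in> iso (G Mod D) H"
    using group_hom.FactGroup_iso_set[OF gh surj] unfolding ker .
  define \<phi> where "\<phi> = inv_into (carrier (G Mod D)) (\<lambda>X. the_elem (h`X))"
  have iso2: "\<phi> \<in> iso H (G Mod D)" unfolding \<phi>_def by (rule group.iso_set_sym[OF grpQ iso1])
  have inj: "inj_on (\<lambda>X. the_elem (h`X)) (carrier (G Mod D))"
    using iso1 by (auto simp: iso_def bij_betw_def)
  have img: "the_elem (h ` (D #>\<^bsub>G\<^esub> g)) = h g" if g: "g \<in> carrier G" for g
  proof -
    have "h ` (D #>\<^bsub>G\<^esub> g) = {h g}"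
    proof
      show "h ` (D #>\<^bsub>G\<^esub> g) \<subseteq> {h g}"
      proof
        fix y assume "y \<in> h ` (D #>\<^bsub>G\<^esub> g)"
        then obtain d where d: "d \<in> D" "y = h (d \<otimes>\<^bsub>G\<^esub> g)" unfolding r_coset_def by auto
        have dk: "d \<in> kernel G H h" using d ker by simp
        then have "h d = \<one>\<^bsub>H\<^esub>" "d \<in> carrier G" unfolding kernel_def by auto
        then have "h (d \<otimes>\<^bsub>G\<^esub> g) = h d \<otimes>\<^bsub>H\<^esub> h g"
          using g hom_mult[OF hom] by blast
        also have "\<dots> = h g"
          using \<open>h d = \<one>\<^bsub>H\<^esub>\<close> monoid.l_one[OF group.is_monoid[OF group_Z_Z2], of "h g" Zs Ts] hom_in_carrier[OF hom g]
          unfolding H_def by simp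
        finally have "h (d \<otimes>\<^bsub>G\<^esub> g) = h g" .
        then show "y \<in> {h g}" using d by simp
      qed
    next
      have "\<one>\<^bsub>G\<^esub> \<in> D" using subgroup.one_closed[OF subD] .
      then have "\<one>\<^bsub>G\<^esub> \<otimes>\<^bsub>G\<^esub> g \<in> D #>\<^bsub>G\<^esub> g" unfolding r_coset_def by auto
      then show "{h g} \<subseteq> h ` (D #>\<^bsub>G\<^esub> g)" using g monoid.l_one[OF group.is_monoid[OF grpG]] by force
    qed
    then show ?thesis by simp
  qed
  have phi: "\<phi> (h (frag_of x)) = D #>\<^bsub>G\<^esub> frag_of x" if "x \<in> S" for x
  proof -
    have fx: "frag_of x \<in> carrier G" using that G_def by simp
    have "D #>\<^bsub>G\<^esub> frag_of x \<in> carrier (G Mod D)"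
      unfolding carrier_FactGroup using fx by blast
    then show ?thesis unfolding \<phi>_def by (rule inv_into_f_eq[OF inj]) (use img[OF fx] in simp)
  qed
  have "cyclic_decomp (G Mod D) (\<lambda>x. D #>\<^bsub>G\<^esub> frag_of x) Zs Ts"
    unfolding cyclic_decomp_def
  proof (intro exI conjI ballI)
    show "\<phi> \<in> iso (Z_Z2_sum Zs Ts) (G Mod D)" using iso2 H_def by simp
  next
    fix x assume x: "x \<in> Zs"
    show "\<phi> (unit_vec (Inl ` Zs \<union> Inr ` Ts) (Inl x)) = D #>\<^bsub>G\<^esub> frag_of x"
      using phi[of x] hfrag[OF x] x ZS unfolding I_def by auto
  next
    fix x assume x: "x \<in> Ts"
    show "\<phi> (unit_vec (Inl ` Zs \<union> Inr ` Ts) (Inr x)) = D #>\<^bsub>G\<^esub> frag_of x"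
      using phi[of x] hfrag2[OF x] x TS unfolding I_def by auto
  qed
  then show ?thesis unfolding G_def D_def .
qed



definition V :: "int \<Rightarrow> int \<times> int \<times> int \<times> int \<Rightarrow> bool" where
  "V p t = (case t of (a,b,c,d) \<Rightarrow> a \<in> Zp p \<and> b \<in> Zp p \<and> c \<in> Zp p \<and> d = br p a b c)"
definition s1 :: "int \<times> int \<times> int \<times> int \<Rightarrow> int \<times> int \<times> int \<times> int" where
  "s1 t = (case t of (a,b,c,d) \<Rightarrow> (b,a,d,c))"
definition s2 :: "int \<times> int \<times> int \<times> int \<Rightarrow> int \<times> int \<times> int \<times> int" where
  "s2 t = (case t of (a,b,c,d) \<Rightarrow> (c,d,a,b))"
definition s12 :: "int \<times> int \<times> int \<times> int \<Rightarrow> int \<times> int \<times> int \<times> int" where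
  "s12 t = (case t of (a,b,c,d) \<Rightarrow> (d,c,b,a))"
definition Qt :: "int \<times> int \<times> int \<times> int \<Rightarrow> (int \<times> int \<times> int \<times> int) set" where
  "Qt t = {t, s1 t, s2 t, s12 t}"
definition lst :: "int \<times> int \<times> int \<times> int \<Rightarrow> (int \<times> int) list" where
  "lst t = (case t of (a,b,c,d) \<Rightarrow> [(a,b),(a,c)])"
definition tup :: "int \<Rightarrow> (int \<times> int) list \<Rightarrow> int \<times> int \<times> int \<times> int" where
  "tup p xs = (fst (xs!0), snd (xs!0), snd (xs!1), br p (fst (xs!0)) (snd (xs!0)) (snd (xs!1)))"
definition E :: "int \<times> int \<times> int \<times> int \<Rightarrow> int" where
  "E t = (case t of (a,b,c,d) \<Rightarrow> if b = c then 0 else if Min (Qt t) = t \<or> Min (Qt t) = s12 t then 1 else -1)"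

lemma br_in: "p > 0 \<Longrightarrow> br p a b c \<in> Zp p"
  unfolding br_def Zp_def by auto

lemma modp_id: "x \<in> Zp p \<Longrightarrow> x mod p = x"
  unfolding Zp_def by auto

lemma br_inv1: "c \<in> Zp p \<Longrightarrow> br p b a (br p a b c) = c"
proof -
  assume c: "c \<in> Zp p"
  have "br p b a (br p a b c) = (b - a + (a - b + c) mod p) mod p" unfolding br_def ..
  also have "\<dots> = (b - a + (a - b + c)) mod p" by (rule mod_add_right_eq)
  also have "\<dots> = c" using modp_id[OF c] by simp
  finally show ?thesis .
qed

lemma br_inv2: "b \<in> Zp p \<Longrightarrow> br p c (br p a b c) a = b"
proof -
  assume c: "b \<in> Zp p"
  have "br p c (br p a b c) a = (c - (a - b + c) mod p + a) mod p" unfolding br_def ..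
  also have "\<dots> = (c - (a - b + c) + a) mod p" by (metis mod_add_left_eq mod_diff_right_eq)
  also have "\<dots> = b" using modp_id[OF c] by simp
  finally show ?thesis .
qed

lemma br_inv3: "a \<in> Zp p \<Longrightarrow> br p (br p a b c) c b = a"
proof -
  assume c: "a \<in> Zp p"
  have "br p (br p a b c) c b = ((a - b + c) mod p - c + b) mod p" unfolding br_def ..
  also have "\<dots> = ((a - b + c) - c + b) mod p" by (metis mod_add_left_eq mod_diff_left_eq)
  also have "\<dots> = a" using modp_id[OF c] by simp
  finally show ?thesis .
qed

lemma br_aac: "c \<in> Zp p \<Longrightarrow> br p a a c = c"
  unfolding br_def using modp_id by simp



lemma small_dvd: "(p::int) dvd x \<Longrightarrow> -p < x \<Longrightarrow> x < p \<Longrightarrow> x = 0"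
proof -
  assume d: "p dvd x" and l: "-p < x" "x < p"
  obtain k where k: "x = p * k" using d by blast
  have p: "p > 0" using l by simp
  show "x = 0"
  proof (cases "k = 0")
    case False
    then have "k \<ge> 1 \<or> k \<le> -1" by linarith
    then show ?thesis
    proof
      assume "k \<ge> 1"
      then have "p * k \<ge> p * 1" using p by (intro mult_left_mono) auto
      then show ?thesis using k l by linarith
    next
      assume "k \<le> -1"
      then have "p * k \<le> p * (-1)" using p by (intro mult_left_mono) auto
      then show ?thesis using k l by linarith
    qed
  qed (use k in simp)
qed

lemma Zp_eq: "x \<in> Zp p \<Longrightarrow> y \<in> Zp p \<Longrightarrow> p dvd (x - y) \<Longrightarrow> x = y"
  unfolding Zp_def using small_dvd[of p "x - y"] by auto

lemma br_eq_a: "a \<in> Zp p \<Longrightarrow> b \<in> Zp p \<Longrightarrow> c \<in> Zp p \<Longrightarrow> br p a b c = a \<longleftrightarrow> b = c"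
proof
  assume a: "a \<in> Zp p" "b \<in> Zp p" "c \<in> Zp p" and "br p a b c = a"
  then have "(a - b + c) mod p = a mod p" unfolding br_def using modp_id by simp
  then have "p dvd (a - b + c) - a" by (simp add: mod_eq_dvd_iff)
  then have "p dvd c - b" by simp
  then show "b = c" using Zp_eq[OF a(3,2)] by simp
next
  assume a: "a \<in> Zp p" "b \<in> Zp p" "c \<in> Zp p" and "b = c"
  then show "br p a b c = a" unfolding br_def using modp_id by simp
qed

lemma br_eq_c: "a \<in> Zp p \<Longrightarrow> b \<in> Zp p \<Longrightarrow> c \<in> Zp p \<Longrightarrow> br p a b c = c \<longleftrightarrow> a = b"
proof
  assume a: "a \<in> Zp p" "b \<in> Zp p" "c \<in> Zp p" and "br p a b c = c"
  then have "(a - b + c) mod p = c mod p" unfolding br_def using modp_id by simp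
  then have "p dvd (a - b + c) - c" by (simp add: mod_eq_dvd_iff)
  then have "p dvd a - b" by simp
  then show "a = b" using Zp_eq[OF a(1,2)] by simp
next
  assume a: "a \<in> Zp p" "b \<in> Zp p" "c \<in> Zp p" and "a = b"
  then show "br p a b c = c" unfolding br_def using modp_id by simp
qed

lemma s2_nofix:
  assumes "prime p" "odd p" "a \<in> Zp p" "b \<in> Zp p" "br p a b a = b"
  shows "a = b"
proof -
  have "(a - b + a) mod p = b mod p" using assms(5) modp_id[OF assms(4)] unfolding br_def by simp
  then have "p dvd (a - b + a) - b" by (simp add: mod_eq_dvd_iff)
  then have "p dvd 2 * (a - b)" by (simp add: algebra_simps)
  then have "p dvd 2 \<or> p dvd (a - b)" by (rule prime_dvd_multD[OF assms(1)])
  moreover have "\<not> p dvd 2"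
  proof
    assume "p dvd 2"
    then have "p \<le> 2" by (simp add: zdvd_imp_le)
    moreover have "p \<ge> 2" using assms(1) prime_ge_2_int by blast
    ultimately have "p = 2" by simp
    then show False using assms(2) by simp
  qed
  ultimately show ?thesis using Zp_eq[OF assms(3,4)] by blast
qed



lemma LB2_iff: "xs \<in> LB p 2 \<longleftrightarrow> (\<exists>a b c. xs = [(a,b),(a,c)] \<and> a \<in> Zp p \<and> b \<in> Zp p \<and> c \<in> Zp p)"
proof
  assume "xs \<in> LB p 2"
  then obtain a where l: "length xs = 2" and h: "\<forall>x\<in>set xs. fst x = a \<and> snd x \<in> Zp p" and a: "a \<in> Zp p"
    unfolding LB_def by auto
  from l obtain x y where "xs = [x,y]" by (auto simp: numeral_2_eq_2 length_Suc_conv)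
  then show "\<exists>a b c. xs = [(a,b),(a,c)] \<and> a \<in> Zp p \<and> b \<in> Zp p \<and> c \<in> Zp p"
    using h a by (cases x, cases y) auto
next
  assume "\<exists>a b c. xs = [(a,b),(a,c)] \<and> a \<in> Zp p \<and> b \<in> Zp p \<and> c \<in> Zp p"
  then show "xs \<in> LB p 2" unfolding LB_def by auto
qed

lemma LB1_iff: "xs \<in> LB p 1 \<longleftrightarrow> (\<exists>a b. xs = [(a,b)] \<and> a \<in> Zp p \<and> b \<in> Zp p)"
proof
  assume "xs \<in> LB p 1"
  then obtain a where l: "length xs = 1" and h: "\<forall>x\<in>set xs. fst x = a \<and> snd x \<in> Zp p" and a: "a \<in> Zp p"
    unfolding LB_def by auto
  from l obtain x where "xs = [x]" by (auto simp: length_Suc_conv)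
  then show "\<exists>a b. xs = [(a,b)] \<and> a \<in> Zp p \<and> b \<in> Zp p"
    using h a by (cases x) auto
next
  assume "\<exists>a b. xs = [(a,b)] \<and> a \<in> Zp p \<and> b \<in> Zp p"
  then show "xs \<in> LB p 1" unfolding LB_def by auto
qed

lemma finite_LB: "finite (LB p n)"
proof -
  have "LB p n \<subseteq> {xs. set xs \<subseteq> Zp p \<times> Zp p \<and> length xs = n}"
    unfolding LB_def by (auto simp: mem_Times_iff)
  moreover have "finite {xs. set xs \<subseteq> Zp p \<times> Zp p \<and> length xs = n}"
    by (rule finite_lists_length_eq) (simp add: Zp_def)
  ultimately show ?thesis by (rule finite_subset)
qed

lemma V_lst: "V p t \<Longrightarrow> lst t \<in> LB p 2 \<and> tup p (lst t) = t"
  by (cases t) (auto simp: V_def lst_def tup_def LB2_iff)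

lemma LB_tup: "xs \<in> LB p 2 \<Longrightarrow> V p (tup p xs) \<and> lst (tup p xs) = xs"
  by (auto simp: V_def lst_def tup_def LB2_iff)

lemma V_s: "p > 0 \<Longrightarrow> V p t \<Longrightarrow> V p (s1 t) \<and> V p (s2 t) \<and> V p (s12 t)"
  by (cases t) (auto simp: V_def s1_def s2_def s12_def br_in br_inv1 br_inv2 br_inv3)

lemma s_comp: "s1 (s1 t) = t" "s2 (s1 t) = s12 t" "s1 (s2 t) = s12 t" "s12 (s1 t) = s2 t"
  "s12 (s2 t) = s1 t" "s2 (s2 t) = t"
  by (cases t; simp add: s1_def s2_def s12_def)+

lemma Qt_s: "Qt (s1 t) = Qt t" "Qt (s2 t) = Qt t" "Qt (s12 t) = Qt t"
  by (cases t; auto simp: Qt_def s1_def s2_def s12_def)+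

lemma Min_Qt: "Min (Qt t) \<in> Qt t" "y \<in> Qt t \<Longrightarrow> Min (Qt t) \<le> y"
  unfolding Qt_def by (rule Min_in; simp) (rule Min_le; simp)

lemma act_lst: "p > 0 \<Longrightarrow> V p t \<Longrightarrow> act p 0 (lst t) = lst (s1 t) \<and> act p 1 (lst t) = lst (s2 t)"
  by (cases t) (auto simp: V_def lst_def s1_def s2_def act_def ustar_def ostar_def rho_def)

definition rep2 :: "int \<Rightarrow> (int \<times> int) list \<Rightarrow> (int \<times> int) list" where
  "rep2 p xs = lst (Min (Qt (tup p xs)))"
definition e2 :: "int \<Rightarrow> (int \<times> int) list \<Rightarrow> int" where
  "e2 p xs = E (tup p xs)"

lemma lex4_le_iff: "lex4_le x y \<longleftrightarrow> x \<le> y"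
  by (cases x; cases y) (auto simp: lex4_le_def lex4_less_def less_eq_prod_def less_prod_def)

lemma is_lexmin_iff: "is_lexmin x (Qt x) \<longleftrightarrow> Min (Qt x) = x"
proof
  assume "is_lexmin x (Qt x)"
  then show "Min (Qt x) = x" unfolding is_lexmin_def lex4_le_iff
    by (intro Min_eqI) (auto simp: Qt_def)
next
  assume m: "Min (Qt x) = x"
  then show "is_lexmin x (Qt x)" unfolding is_lexmin_def lex4_le_iff
    using Min_Qt[where t=x] by auto
qed

lemma Qset_Qt: "Qset p a b c = Qt (a, b, c, br p a b c)"
  by (simp add: Qset_def Qt_def s1_def s2_def s12_def Let_def)



lemma V_cases: "V p t \<Longrightarrow> \<exists>a b c. t = (a,b,c,br p a b c) \<and> a \<in> Zp p \<and> b \<in> Zp p \<and> c \<in> Zp p"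
  by (cases t) (auto simp: V_def)

context
  fixes p :: int
  assumes pp: "prime p" and po: "odd p"
begin

lemma p_pos: "p > 0" using pp prime_gt_0_int by blast

lemma E_vals: "E t \<in> {-1,0,1}" by (cases t) (auto simp: E_def)

lemma E_zero: "E (a,b,c,d) = 0 \<longleftrightarrow> b = c" by (auto simp: E_def)

lemma deg_inv:
  assumes "V p t" "m \<in> Qt t"
  shows "(E m = 0 \<longleftrightarrow> E t = 0) \<and> (fst m = fst (snd m) \<longleftrightarrow> fst t = fst (snd t))"
proof -
  obtain a b c where t: "t = (a,b,c,br p a b c)" "a \<in> Zp p" "b \<in> Zp p" "c \<in> Zp p"
    using V_cases[OF assms(1)] by blast
  have e1: "br p a b c = a \<longleftrightarrow> b = c" using br_eq_a[OF t(2,3,4)] .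
  have e2: "br p a b c = c \<longleftrightarrow> a = b" using br_eq_c[OF t(2,3,4)] .
  show ?thesis using assms(2) e1 e2 unfolding t(1) Qt_def s1_def s2_def s12_def
    by (auto simp: E_zero)
qed

lemma E_alt: "E t = (if fst (snd t) = fst (snd (snd t)) then 0 else if Min (Qt t) = t \<or> Min (Qt t) = s12 t then 1 else -1)"
  by (cases t) (simp add: E_def)

lemma E_sign:
  assumes "V p t" "fst t \<noteq> fst (snd t)" "E t \<noteq> 0"
  shows "E (s1 t) = - E t \<and> E (s2 t) = - E t"
proof -
  obtain a b c where t: "t = (a,b,c,br p a b c)" "a \<in> Zp p" "b \<in> Zp p" "c \<in> Zp p"
    using V_cases[OF assms(1)] by blast
  define d where "d = br p a b c"
  have ab: "a \<noteq> b" using assms(2) t by simp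
  have bc: "b \<noteq> c" using assms(3) t by (simp add: E_zero)
  have ad: "a \<noteq> d" using br_eq_a[OF t(2,3,4)] bc d_def by metis
  have cd: "c \<noteq> d" using br_eq_c[OF t(2,3,4)] ab d_def by metis
  have acbd: "\<not> (a = c \<and> b = d)" using s2_nofix[OF pp po t(2,3)] ab d_def by metis
  have td: "t = (a,b,c,d)" using t d_def by simp
  have dist: "t \<noteq> s1 t" "t \<noteq> s2 t" "t \<noteq> s12 t" "s1 t \<noteq> s2 t" "s1 t \<noteq> s12 t" "s2 t \<noteq> s12 t"
    using ab bc ad cd acbd unfolding td s1_def s2_def s12_def by auto
  have nd1: "\<not> fst (snd (s1 t)) = fst (snd (snd (s1 t)))" "\<not> fst (snd (s2 t)) = fst (snd (snd (s2 t)))"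
      "\<not> fst (snd t) = fst (snd (snd t))"
    using ad bc unfolding td s1_def s2_def by auto
  define m where "m = Min (Qt t)"
  have mQ: "m = t \<or> m = s1 t \<or> m = s2 t \<or> m = s12 t" using Min_Qt(1)[of t] unfolding m_def Qt_def by auto
  have e0: "E t = (if m = t \<or> m = s12 t then 1 else -1)" using nd1 unfolding m_def by (subst E_alt) simp
  have e1: "E (s1 t) = (if m = s1 t \<or> m = s2 t then 1 else -1)"
    using nd1 unfolding m_def by (subst E_alt) (simp add: Qt_s s_comp)
  have e2: "E (s2 t) = (if m = s2 t \<or> m = s1 t then 1 else -1)"
    using nd1 unfolding m_def by (subst E_alt) (simp add: Qt_s s_comp)
  show ?thesis using mQ dist e0 e1 e2 by auto
qed

end



lemma lst_eq: "lst m = [(fst m, fst (snd m)), (fst m, fst (snd (snd m)))]"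
  by (cases m) (simp add: lst_def)

context
  fixes p :: int
  assumes pp: "prime p" and po: "odd p"
begin

lemma pos: "p > 0" using p_pos[OF pp po] .

lemma rep_lst: "V p t \<Longrightarrow> rep2 p (lst t) = lst (Min (Qt t))"
  unfolding rep2_def using V_lst by simp

lemma e_lst: "V p t \<Longrightarrow> e2 p (lst t) = E t"
  unfolding e2_def using V_lst by simp

lemma act_cases:
  assumes "V p t" "i < (2::nat)"
  shows "\<exists>t'. act p i (lst t) = lst t' \<and> V p t' \<and> t' \<in> Qt t \<and> Qt t' = Qt t
     \<and> (fst t \<noteq> fst (snd t) \<longrightarrow> E t \<noteq> 0 \<longrightarrow> E t' = - E t)"
proof -
  have "i = 0 \<or> i = 1" using assms(2) by auto
  then show ?thesis
  proof
    assume "i = 0"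
    then show ?thesis using act_lst[OF pos assms(1)] V_s[OF pos assms(1)] E_sign[OF pp po assms(1)]
      by (intro exI[of _ "s1 t"]) (simp add: Qt_s Qt_def[of t])
  next
    assume "i = 1"
    then show ?thesis using act_lst[OF pos assms(1)] V_s[OF pos assms(1)] E_sign[OF pp po assms(1)]
      by (intro exI[of _ "s2 t"]) (simp add: Qt_s Qt_def[of t])
  qed
qed

abbreviation "S2 \<equiv> LB p 2"
abbreviation "R2 \<equiv> D_lb_gens p 2 \<union> D_rho_gens p 2"
abbreviation "Zs2 \<equiv> {[(a, b), (a, c)] | a b c. a \<in> Zp p \<and> b \<in> Zp p \<and> c \<in> Zp p \<and> a \<noteq> b \<and> b \<noteq> c
                                \<and> is_lexmin (a, b, c, br p a b c) (Qset p a b c)}"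
abbreviation "Ts2 \<equiv> {[(a, a), (a, b)] | a b. a \<in> Zp p \<and> b \<in> Zp p \<and> a < b}"

lemma R2_cases:
  assumes "r \<in> R2"
  shows "(\<exists>t. V p t \<and> E t = 0 \<and> r = frag_of (lst t)) \<or>
         (\<exists>t t'. V p t \<and> V p t' \<and> t' \<in> Qt t \<and> Qt t' = Qt t \<and> r = frag_of (lst t) + frag_of (lst t')
              \<and> (fst t \<noteq> fst (snd t) \<longrightarrow> E t \<noteq> 0 \<longrightarrow> E t' = - E t))"
  using assms
proof
  assume "r \<in> D_lb_gens p 2"
  then obtain xs i where xs: "r = frag_of xs" "xs \<in> S2" "i + 1 < 2" "snd (xs ! i) = snd (xs ! (i+1))"
    unfolding D_lb_gens_def by blast
  obtain t where t: "V p t" "lst t = xs" using LB_tup[OF xs(2)] by blast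
  have i0: "i = 0" using xs(3) by simp
  obtain a b c d where td: "t = (a,b,c,d)" by (cases t) auto
  have "b = c" using xs(4) t(2) i0 unfolding td lst_def by auto
  then have "E t = 0" unfolding td by (simp add: E_def)
  then show ?thesis using t xs(1) by (intro disjI1 exI[of _ t]) simp
next
  assume "r \<in> D_rho_gens p 2"
  then obtain xs i where xs: "r = frag_of xs + frag_of (act p i xs)" "xs \<in> S2" "i < 2"
    unfolding D_rho_gens_def by blast
  obtain t where t: "V p t" "lst t = xs" using LB_tup[OF xs(2)] by blast
  obtain t' where "act p i (lst t) = lst t' \<and> V p t' \<and> t' \<in> Qt t \<and> Qt t' = Qt t
     \<and> (fst t \<noteq> fst (snd t) \<longrightarrow> E t \<noteq> 0 \<longrightarrow> E t' = - E t)" using act_cases[OF t(1) xs(3)] by blast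
  then have "V p t \<and> V p t' \<and> t' \<in> Qt t \<and> Qt t' = Qt t \<and> r = frag_of (lst t) + frag_of (lst t')
              \<and> (fst t \<noteq> fst (snd t) \<longrightarrow> E t \<noteq> 0 \<longrightarrow> E t' = - E t)" using t xs(1) by simp
  then show ?thesis by blast
qed

end



lemma cmul2: "frag_cmul 2 x = x + x"
  by (rule poly_mapping_eqI) (simp add: lookup_add)

context
  fixes p :: int
  assumes pp: "prime p" and po: "odd p"
begin

lemma V_Qt:
  assumes "V p t" "m \<in> Qt t"
  shows "V p m \<and> Qt m = Qt t"
proof -
  have "m = t \<or> m = s1 t \<or> m = s2 t \<or> m = s12 t" using assms(2) unfolding Qt_def by auto
  then show ?thesis using assms(1) V_s[OF pos[OF pp po] assms(1)] by (elim disjE) (simp_all add: Qt_s)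
qed

lemma Rc2: "R2 p \<subseteq> carrier (free_Abelian_group (S2 p))"
proof
  fix r assume "r \<in> R2 p"
  from R2_cases[OF pp po this]
  show "r \<in> carrier (free_Abelian_group (S2 p))"
  proof
    assume "\<exists>t. V p t \<and> E t = 0 \<and> r = frag_of (lst t)"
    then show ?thesis using V_lst by auto
  next
    assume "\<exists>t t'. V p t \<and> V p t' \<and> t' \<in> Qt t \<and> Qt t' = Qt t \<and> r = frag_of (lst t) + frag_of (lst t')
              \<and> (fst t \<noteq> fst (snd t) \<longrightarrow> E t \<noteq> 0 \<longrightarrow> E t' = - E t)"
    then obtain t t' where "V p t" "V p t'" "r = frag_of (lst t) + frag_of (lst t')" by blast
    then show ?thesis using V_lst[of p t] V_lst[of p t'] keys_add[of "frag_of (lst t)" "frag_of (lst t')"]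
      by auto
  qed
qed

lemma cf_R2:
  assumes "r \<in> R2 p"
  shows "\<exists>t t'. V p t \<and> t' \<in> Qt t \<and>
     cf (S2 p) (rep2 p) (e2 p) r z = (if rep2 p (lst t) = z then E t + E t' else 0)
     \<and> (fst t \<noteq> fst (snd t) \<longrightarrow> E t \<noteq> 0 \<longrightarrow> E t' = - E t)"
  using R2_cases[OF pp po assms]
proof
  assume "\<exists>t. V p t \<and> E t = 0 \<and> r = frag_of (lst t)"
  then obtain t where t: "V p t" "E t = 0" "r = frag_of (lst t)" by blast
  have "cf (S2 p) (rep2 p) (e2 p) r z = (if rep2 p (lst t) = z then E t + E t else 0)"
    using t cf_frag[OF finite_LB, of "lst t" p 2 "rep2 p" "e2 p" z] V_lst[OF t(1)] e_lst[OF pp po t(1)]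
    by simp
  moreover have "t \<in> Qt t" by (simp add: Qt_def)
  ultimately show ?thesis using t by blast
next
  assume "\<exists>t t'. V p t \<and> V p t' \<and> t' \<in> Qt t \<and> Qt t' = Qt t \<and> r = frag_of (lst t) + frag_of (lst t')
              \<and> (fst t \<noteq> fst (snd t) \<longrightarrow> E t \<noteq> 0 \<longrightarrow> E t' = - E t)"
  then obtain t t' where t: "V p t" "V p t'" "t' \<in> Qt t" "Qt t' = Qt t" "r = frag_of (lst t) + frag_of (lst t')"
     "(fst t \<noteq> fst (snd t) \<longrightarrow> E t \<noteq> 0 \<longrightarrow> E t' = - E t)" by blast
  have rr: "rep2 p (lst t') = rep2 p (lst t)" using rep_lst[OF pp po] t by simp
  have "cf (S2 p) (rep2 p) (e2 p) r z = (if rep2 p (lst t) = z then E t + E t' else 0)"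
    unfolding t(5) cf_add[OF finite_LB]
    using cf_frag[OF finite_LB, of "lst t" p 2 "rep2 p" "e2 p" z] V_lst[OF t(1)] e_lst[OF pp po t(1)]
      cf_frag[OF finite_LB, of "lst t'" p 2 "rep2 p" "e2 p" z] V_lst[OF t(2)] e_lst[OF pp po t(2)] rr
    by simp
  then show ?thesis using t by blast
qed

lemma Rz2:
  assumes "r \<in> R2 p" "z \<in> Zs2 p"
  shows "cf (S2 p) (rep2 p) (e2 p) r z = 0"
proof -
  obtain t t' where t: "V p t" "t' \<in> Qt t"
     "cf (S2 p) (rep2 p) (e2 p) r z = (if rep2 p (lst t) = z then E t + E t' else 0)"
     "(fst t \<noteq> fst (snd t) \<longrightarrow> E t \<noteq> 0 \<longrightarrow> E t' = - E t)"
    using cf_R2[OF assms(1)] by blast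
  show ?thesis
  proof (cases "rep2 p (lst t) = z")
    case False then show ?thesis using t by simp
  next
    case True
    show ?thesis
    proof (cases "E t = 0")
      case True
      then have "E t' = 0" using deg_inv[OF pp po t(1,2)] by simp
      then show ?thesis using t True by simp
    next
      case Ene: False
      show ?thesis
      proof (cases "fst t = fst (snd t)")
        case False then show ?thesis using t Ene by simp
      next
        case eq: True
        define m where "m = Min (Qt t)"
        have "m \<in> Qt t" unfolding m_def by (rule Min_Qt)
        then have "fst m = fst (snd m)" using deg_inv[OF pp po t(1)] eq by blast
        moreover have "lst m = z" using True rep_lst[OF pp po t(1)] m_def by simp
        ultimately show ?thesis using assms(2) unfolding lst_eq[of m] by auto
      qed
    qed
  qed
qed

lemma Rt2:
  assumes "r \<in> R2 p" "z \<in> Ts2 p"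
  shows "even (cf (S2 p) (rep2 p) (e2 p) r z)"
proof -
  obtain t t' where t: "V p t" "t' \<in> Qt t"
     "cf (S2 p) (rep2 p) (e2 p) r z = (if rep2 p (lst t) = z then E t + E t' else 0)"
    using cf_R2[OF assms(1)] by blast
  have z: "E t = 0 \<longleftrightarrow> E t' = 0" using deg_inv[OF pp po t(1,2)] by simp
  have "E t \<in> {-1,0,1}" "E t' \<in> {-1,0,1}" using E_vals[OF pp po] by auto
  then have "even (E t + E t')" using z by auto
  then show ?thesis using t by simp
qed

end



context
  fixes p :: int
  assumes pp: "prime p" and po: "odd p"
begin

lemma repin2:
  assumes "x \<in> S2 p" "e2 p x \<noteq> 0"
  shows "rep2 p x \<in> Zs2 p \<union> Ts2 p"
proof -
  obtain t where t: "V p t" "lst t = x" using LB_tup[OF assms(1)] by blast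
  have Et: "E t \<noteq> 0" using assms(2) e_lst[OF pp po t(1)] t(2) by simp
  define m where "m = Min (Qt t)"
  have mQ: "m \<in> Qt t" unfolding m_def by (rule Min_Qt)
  have Vm: "V p m" and Qm: "Qt m = Qt t" using V_Qt[OF pp po t(1) mQ] by auto
  have Em: "E m \<noteq> 0" using deg_inv[OF pp po t(1) mQ] Et by simp
  have mm: "Min (Qt m) = m" using Qm m_def by simp
  have rx: "rep2 p x = lst m" using rep_lst[OF pp po t(1)] t(2) m_def by simp
  obtain a b c where m: "m = (a,b,c,br p a b c)" "a \<in> Zp p" "b \<in> Zp p" "c \<in> Zp p"
    using V_cases[OF Vm] by blast
  have bc: "b \<noteq> c" using Em m(1) by (auto simp: E_def)
  show ?thesis
  proof (cases "a = b")
    case False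
    have "is_lexmin (a, b, c, br p a b c) (Qset p a b c)"
      unfolding Qset_Qt is_lexmin_iff using mm m(1) by simp
    moreover have "lst m = [(a,b),(a,c)]" using m(1) by (simp add: lst_def)
    ultimately have "lst m \<in> Zs2 p" using m False bc
      by (intro CollectI exI[of _ a] exI[of _ b] exI[of _ c]) simp
    then show ?thesis using rx by simp
  next
    case True
    have d: "br p a b c = c" using True br_aac[OF m(4)] by simp
    have "s2 m \<in> Qt m" by (simp add: Qt_def)
    then have "m \<le> s2 m" using Min_Qt(2)[of "s2 m" m] mm by simp
    then have "a \<le> c" using m(1) d True by (auto simp: s2_def less_eq_prod_def less_prod_def)
    then have "a < c" using bc True by simp
    moreover have "lst m = [(a,a),(a,c)]" using m(1) True by (simp add: lst_def)
    ultimately have "lst m \<in> Ts2 p" using m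
      by (intro CollectI exI[of _ a] exI[of _ c]) simp
    then show ?thesis using rx by simp
  qed
qed

abbreviation "D2 \<equiv> generate (free_Abelian_group (S2 p)) (R2 p)"

lemma subD2: "subgroup (D2) (free_Abelian_group (S2 p))"
  using group.generate_is_subgroup[OF group_free_Abelian_group Rc2[OF pp po]] .

lemma rho_in: "xs \<in> S2 p \<Longrightarrow> i < 2 \<Longrightarrow> frag_of xs + frag_of (act p i xs) \<in> D2"
  by (rule generate.incl) (auto simp: D_rho_gens_def)

lemma red2:
  assumes "x \<in> S2 p"
  shows "frag_of x - frag_cmul (e2 p x) (frag_of (rep2 p x)) \<in> D2"
proof -
  obtain t where t: "V p t" "lst t = x" using LB_tup[OF assms(1)] by blast
  have ex: "e2 p x = E t" using e_lst[OF pp po t(1)] t(2) by simp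
  define m where "m = Min (Qt t)"
  have rx: "rep2 p x = lst m" using rep_lst[OF pp po t(1)] t(2) m_def by simp
  have Vs: "V p (s1 t)" "V p (s2 t)" "V p (s12 t)" using V_s[OF pos[OF pp po] t(1)] by auto
  have acts: "act p 0 x = lst (s1 t)" "act p 1 x = lst (s2 t)" using act_lst[OF pos[OF pp po] t(1)] t(2) by auto
  have act1: "act p 1 (lst (s1 t)) = lst (s12 t)" using act_lst[OF pos[OF pp po] Vs(1)] by (simp add: s_comp)
  have inS: "lst (s1 t) \<in> S2 p" using V_lst[OF Vs(1)] by simp
  have g1: "frag_of x + frag_of (lst (s1 t)) \<in> D2" using rho_in[OF assms, of 0] acts by simp
  have g2: "frag_of x + frag_of (lst (s2 t)) \<in> D2" using rho_in[OF assms, of 1] acts by simp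
  have g3: "frag_of (lst (s1 t)) + frag_of (lst (s12 t)) \<in> D2" using rho_in[OF inS, of 1] act1 by simp
  show ?thesis
  proof (cases "E t = 0")
    case True
    obtain a b c d where td: "t = (a,b,c,d)" by (cases t) auto
    have "b = c" using True td by (simp add: E_def split: if_splits)
    then have "frag_of x \<in> D_lb_gens p 2" using assms t(2) td unfolding D_lb_gens_def lst_def
      by (intro CollectI exI[of _ x]) (auto intro: exI[of _ 0])
    then have "frag_of x \<in> D2" by (intro generate.incl) auto
    then show ?thesis using True ex by simp
  next
    case False
    have nd: "fst (snd t) \<noteq> fst (snd (snd t))" using False by (cases t) (auto simp: E_def)
    have Ealt: "E t = (if m = t \<or> m = s12 t then 1 else -1)" using E_alt[OF pp po, of t] nd m_def by simp
    have mQ: "m = t \<or> m = s1 t \<or> m = s2 t \<or> m = s12 t" using Min_Qt(1)[of t] unfolding m_def Qt_def by auto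
    show ?thesis
    proof (cases "m = t")
      case True
      then have "frag_of x - frag_cmul (e2 p x) (frag_of (rep2 p x)) = 0" using ex Ealt rx t(2) by simp
      then show ?thesis using subgroup.one_closed[OF subD2] by simp
    next
      case F1: False
      show ?thesis
      proof (cases "m = s12 t")
        case True
        have "e2 p x = 1" using ex Ealt True by simp
        moreover have "rep2 p x = lst (s12 t)" using rx True by simp
        ultimately have eq: "frag_of x - frag_cmul (e2 p x) (frag_of (rep2 p x)) =
           (frag_of x + frag_of (lst (s1 t))) - (frag_of (lst (s1 t)) + frag_of (lst (s12 t)))"
          by simp
        show ?thesis unfolding eq by (rule subgroup_diff_closed[OF subD2 g1 g3])
      next
        case F2: False
        show ?thesis
        proof (cases "m = s1 t")
          case True
          have "e2 p x = -1" using ex Ealt True F1 F2 by simp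
          moreover have "rep2 p x = lst (s1 t)" using rx True by simp
          ultimately have eq: "frag_of x - frag_cmul (e2 p x) (frag_of (rep2 p x)) = frag_of x + frag_of (lst (s1 t))"
            by simp
          show ?thesis unfolding eq by (rule g1)
        next
          case F3: False
          then have m2: "m = s2 t" using mQ F1 F2 by simp
          have "e2 p x = -1" using ex Ealt F1 F2 by simp
          moreover have "rep2 p x = lst (s2 t)" using rx m2 by simp
          ultimately have eq: "frag_of x - frag_cmul (e2 p x) (frag_of (rep2 p x)) = frag_of x + frag_of (lst (s2 t))"
            by simp
          show ?thesis unfolding eq by (rule g2)
        qed
      qed
    qed
  qed
qed

end



context
  fixes p :: int
  assumes pp: "prime p" and po: "odd p"
begin

lemma Ts_tuple:
  assumes "z \<in> Ts2 p"
  shows "\<exists>a b. z = lst (a,a,b,b) \<and> V p (a,a,b,b) \<and> Min (Qt (a,a,b,b)) = (a,a,b,b) \<and> a < b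
            \<and> s1 (a,a,b,b) = (a,a,b,b)"
proof -
  obtain a b where z: "z = [(a, a), (a, b)]" "a \<in> Zp p" "b \<in> Zp p" "a < b" using assms by blast
  have V: "V p (a,a,b,b)" using z br_aac[OF z(3), of a] by (simp add: V_def)
  have "Min (Qt (a,a,b,b)) = (a,a,b,b)"
    by (rule Min_eqI) (use z(4) in \<open>auto simp: Qt_def s1_def s2_def s12_def less_eq_prod_def less_prod_def\<close>)
  then show ?thesis using z V by (intro exI[of _ a] exI[of _ b]) (simp add: lst_def s1_def)
qed

lemma fixz2:
  assumes "z \<in> Zs2 p \<union> Ts2 p"
  shows "rep2 p z = z \<and> e2 p z = 1"
proof -
  obtain t where t: "V p t" "lst t = z" "Min (Qt t) = t" "fst (snd t) \<noteq> fst (snd (snd t))"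
  proof (cases "z \<in> Zs2 p")
    case True
    then obtain a b c where z: "z = [(a, b), (a, c)]" "a \<in> Zp p" "b \<in> Zp p" "c \<in> Zp p" "a \<noteq> b" "b \<noteq> c"
        "is_lexmin (a, b, c, br p a b c) (Qset p a b c)" by blast
    have "Min (Qt (a, b, c, br p a b c)) = (a, b, c, br p a b c)"
      using z(7) unfolding Qset_Qt is_lexmin_iff .
    then show ?thesis using z by (intro that[of "(a, b, c, br p a b c)"]) (auto simp: V_def lst_def)
  next
    case False
    then have "z \<in> Ts2 p" using assms by blast
    then obtain a b where "z = lst (a,a,b,b) \<and> V p (a,a,b,b) \<and> Min (Qt (a,a,b,b)) = (a,a,b,b) \<and> a < b"
      using Ts_tuple by blast
    then show ?thesis by (intro that[of "(a,a,b,b)"]) auto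
  qed
  have "rep2 p z = z" using rep_lst[OF pp po t(1)] t(2,3) by simp
  moreover have "e2 p z = 1" using e_lst[OF pp po t(1)] t E_alt[OF pp po, of t] by simp
  ultimately show ?thesis by simp
qed

lemma two2:
  assumes "z \<in> Ts2 p"
  shows "frag_cmul 2 (frag_of z) \<in> D2 p"
proof -
  obtain a b where z: "z = lst (a,a,b,b)" "V p (a,a,b,b)" "s1 (a,a,b,b) = (a,a,b,b)"
    using Ts_tuple[OF assms] by blast
  have zS: "z \<in> S2 p" using V_lst[OF z(2)] z(1) by simp
  have "act p 0 z = z" using act_lst[OF pos[OF pp po] z(2)] z by simp
  then have "frag_of z + frag_of z \<in> D2 p" using rho_in[OF pp po zS, of 0] by simp
  then show ?thesis by (simp add: cmul2)
qed

lemma ZsS2: "Zs2 p \<subseteq> S2 p" by (auto simp: LB2_iff)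
lemma TsS2: "Ts2 p \<subseteq> S2 p" by (auto simp: LB2_iff)
lemma disj2: "Zs2 p \<inter> Ts2 p = {}" by auto

lemma n2: "cyclic_decomp (C_SLB p 2) (cls p 2) (Zs2 p) (Ts2 p)"
proof -
  have "cyclic_decomp (free_Abelian_group (S2 p) Mod D2 p)
           (\<lambda>x. D2 p #>\<^bsub>free_Abelian_group (S2 p)\<^esub> frag_of x) (Zs2 p) (Ts2 p)"
    by (rule abstract_decomp[OF finite_LB ZsS2 TsS2 disj2 Rc2[OF pp po] Rz2[OF pp po] Rt2[OF pp po]
          repin2[OF pp po] red2[OF pp po] fixz2 two2])
  moreover have "cls p 2 = (\<lambda>x. D2 p #>\<^bsub>free_Abelian_group (S2 p)\<^esub> frag_of x)"
    by (rule ext) (simp add: cls_def D_SLB_def C_lb_def)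
  ultimately show ?thesis by (simp add: C_SLB_def D_SLB_def C_lb_def)
qed

end



definition rep1 :: "(int \<times> int) list \<Rightarrow> (int \<times> int) list" where
  "rep1 xs = [(min (fst (hd xs)) (snd (hd xs)), max (fst (hd xs)) (snd (hd xs)))]"
definition e1 :: "(int \<times> int) list \<Rightarrow> int" where
  "e1 xs = (if fst (hd xs) \<le> snd (hd xs) then 1 else -1)"

abbreviation "S1 p \<equiv> LB p 1"
abbreviation "R1 p \<equiv> D_lb_gens p 1 \<union> D_rho_gens p 1"
abbreviation "Zs1 p \<equiv> {[(a, b)] | a b. a \<in> Zp p \<and> b \<in> Zp p \<and> a < b}"
abbreviation "Ts1 p \<equiv> {[(a, a)] | a. a \<in> Zp p}"
abbreviation "D1 p \<equiv> generate (free_Abelian_group (S1 p)) (R1 p)"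

lemma LB1_iff': "xs \<in> LB p (Suc 0) \<longleftrightarrow> (\<exists>a b. xs = [(a,b)] \<and> a \<in> Zp p \<and> b \<in> Zp p)"
  using LB1_iff[of xs p] by simp

lemmas LB1s = LB1_iff LB1_iff'

lemma act1: "act p 0 [(a,b)] = [(b,a)]"
  by (simp add: act_def rho_def)

lemma R1_cases: "r \<in> R1 p \<Longrightarrow> \<exists>a b. a \<in> Zp p \<and> b \<in> Zp p \<and> r = frag_of [(a,b)] + frag_of [(b,a)]"
  by (auto simp: D_lb_gens_def D_rho_gens_def LB1s act1) blast

lemma Rc1: "R1 p \<subseteq> carrier (free_Abelian_group (S1 p))"
proof
  fix r assume "r \<in> R1 p"
  then obtain a b where ab: "a \<in> Zp p" "b \<in> Zp p" "r = frag_of [(a,b)] + frag_of [(b,a)]"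
    using R1_cases by blast
  then show "r \<in> carrier (free_Abelian_group (S1 p))"
    using keys_add[of "frag_of [(a,b)]" "frag_of [(b,a)]"] by (auto simp: LB1s)
qed

lemma cf_R1:
  assumes "r \<in> R1 p"
  shows "\<exists>a b. cf (S1 p) rep1 e1 r z = (if rep1 [(a,b)] = z then e1 [(a,b)] + e1 [(b,a)] else 0)"
proof -
  obtain a b where ab: "a \<in> Zp p" "b \<in> Zp p" "r = frag_of [(a,b)] + frag_of [(b,a)]"
    using R1_cases[OF assms] by blast
  have i: "[(a,b)] \<in> S1 p" "[(b,a)] \<in> S1 p" using ab by (auto simp: LB1s)
  have "rep1 [(b,a)] = rep1 [(a,b)]" by (simp add: rep1_def min.commute max.commute)
  then show ?thesis unfolding ab(3) cf_add[OF finite_LB] cf_frag[OF finite_LB i(1)] cf_frag[OF finite_LB i(2)]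
    by (intro exI[of _ a] exI[of _ b]) simp
qed

lemma Rz1: "r \<in> R1 p \<Longrightarrow> z \<in> Zs1 p \<Longrightarrow> cf (S1 p) rep1 e1 r z = 0"
proof -
  assume r: "r \<in> R1 p" and z: "z \<in> Zs1 p"
  obtain a b where c: "cf (S1 p) rep1 e1 r z = (if rep1 [(a,b)] = z then e1 [(a,b)] + e1 [(b,a)] else 0)"
    using cf_R1[OF r] by blast
  show ?thesis
  proof (cases "a = b")
    case True
    then have "rep1 [(a,b)] \<noteq> z" using z by (auto simp: rep1_def)
    then show ?thesis using c by simp
  next
    case False then show ?thesis using c by (auto simp: e1_def)
  qed
qed

lemma Rt1: "r \<in> R1 p \<Longrightarrow> z \<in> Ts1 p \<Longrightarrow> even (cf (S1 p) rep1 e1 r z)"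
proof -
  assume r: "r \<in> R1 p"
  obtain a b where c: "cf (S1 p) rep1 e1 r z = (if rep1 [(a,b)] = z then e1 [(a,b)] + e1 [(b,a)] else 0)"
    using cf_R1[OF r] by blast
  then show ?thesis by (auto simp: e1_def)
qed

lemma repin1: "x \<in> S1 p \<Longrightarrow> e1 x \<noteq> 0 \<Longrightarrow> rep1 x \<in> Zs1 p \<union> Ts1 p"
proof -
  assume "x \<in> S1 p"
  then obtain a b where x: "x = [(a,b)]" "a \<in> Zp p" "b \<in> Zp p" by (auto simp: LB1s)
  show ?thesis
  proof (cases "a = b")
    case True then show ?thesis using x by (auto simp: rep1_def)
  next
    case False
    then have "rep1 x \<in> Zs1 p" using x
      by (intro CollectI exI[of _ "min a b"] exI[of _ "max a b"]) (auto simp: rep1_def min_def max_def)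
    then show ?thesis by simp
  qed
qed

lemma subD1: "subgroup (D1 p) (free_Abelian_group (S1 p))"
  using group.generate_is_subgroup[OF group_free_Abelian_group Rc1] .

lemma gen1: "a \<in> Zp p \<Longrightarrow> b \<in> Zp p \<Longrightarrow> frag_of [(a,b)] + frag_of [(b,a)] \<in> D1 p"
proof -
  assume ab: "a \<in> Zp p" "b \<in> Zp p"
  have "frag_of [(a,b)] + frag_of (act p 0 [(a,b)]) \<in> D_rho_gens p 1"
    unfolding D_rho_gens_def using ab by (auto simp: LB1s)
  then show ?thesis by (intro generate.incl) (auto simp: act1)
qed

lemma red1: "x \<in> S1 p \<Longrightarrow> frag_of x - frag_cmul (e1 x) (frag_of (rep1 x)) \<in> D1 p"
proof -
  assume "x \<in> S1 p"
  then obtain a b where x: "x = [(a,b)]" "a \<in> Zp p" "b \<in> Zp p" by (auto simp: LB1s)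
  show ?thesis
  proof (cases "a \<le> b")
    case True
    then have "frag_of x - frag_cmul (e1 x) (frag_of (rep1 x)) = 0" using x by (simp add: e1_def rep1_def)
    then show ?thesis using subgroup.one_closed[OF subD1] by simp
  next
    case False
    then have eq: "frag_of x - frag_cmul (e1 x) (frag_of (rep1 x)) = frag_of [(a,b)] + frag_of [(b,a)]"
      using x by (simp add: e1_def rep1_def)
    show ?thesis unfolding eq by (rule gen1[OF x(2,3)])
  qed
qed

lemma fixz1: "z \<in> Zs1 p \<union> Ts1 p \<Longrightarrow> rep1 z = z \<and> e1 z = 1"
  by (auto simp: rep1_def e1_def)

lemma two1: "z \<in> Ts1 p \<Longrightarrow> frag_cmul 2 (frag_of z) \<in> D1 p"
proof -
  assume "z \<in> Ts1 p"
  then obtain a where z: "z = [(a,a)]" "a \<in> Zp p" by blast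
  show ?thesis using gen1[OF z(2) z(2)] z(1) by (simp add: cmul2)
qed

lemma n1: "cyclic_decomp (C_SLB p 1) (cls p 1) (Zs1 p) (Ts1 p)"
proof -
  have "cyclic_decomp (free_Abelian_group (S1 p) Mod D1 p)
           (\<lambda>x. D1 p #>\<^bsub>free_Abelian_group (S1 p)\<^esub> frag_of x) (Zs1 p) (Ts1 p)"
    by (rule abstract_decomp[OF finite_LB _ _ _ Rc1 Rz1 Rt1 repin1 red1 fixz1 two1])
       (auto simp: LB1s)
  moreover have "cls p 1 = (\<lambda>x. D1 p #>\<^bsub>free_Abelian_group (S1 p)\<^esub> frag_of x)"
    by (rule ext) (simp add: cls_def D_SLB_def C_lb_def)
  ultimately show ?thesis by (simp add: C_SLB_def D_SLB_def C_lb_def)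
qed

theorem lemma3p2:
  fixes p :: int
  assumes "prime p" and "odd p"
  shows "cyclic_decomp (C_SLB p 2) (cls p 2)
           {[(a, b), (a, c)] | a b c. a \<in> Zp p \<and> b \<in> Zp p \<and> c \<in> Zp p \<and> a \<noteq> b \<and> b \<noteq> c
                                \<and> is_lexmin (a, b, c, br p a b c) (Qset p a b c)}
           {[(a, a), (a, b)] | a b. a \<in> Zp p \<and> b \<in> Zp p \<and> a < b}
       \<and> cyclic_decomp (C_SLB p 1) (cls p 1)
           {[(a, b)] | a b. a \<in> Zp p \<and> b \<in> Zp p \<and> a < b}
           {[(a, a)] | a. a \<in> Zp p}"
  using n2[OF assms] n1[of p] by simp



end
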